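(* Let $0<p<\infty$ and $0<t<p$. There is a constant $C$ such that for all $y\in\mathbb{R}^n$ and all $f\in L^p(\mathbb{R}^n)$, $$\big\Vert\mathscr{M}^y_tf\big\Vert_{L^p(\mathbb{R}^n)}\le C\big(\ln(e+|y|)\big)^{1/p}\Vert f\Vert_{L^p(\mathbb{R}^n)}.$$
   Context: $\mathcal{D}$ is the set of dyadic cubes in $\mathbb{R}^n$, $\ell(Q)$ the side length of $Q$. For $y\in\mathbb{R}^n$ and $Q\in\mathcal{D}$ let $Q(y):=Q+\ell(Q)y$. The shifted dyadic maximal operator is $\mathscr{M}^yf(x):=\sup_{Q\in\mathcal{D}:x\in Q}\frac{1}{|Q|}\int_{Q(y)}|f(z)|\,dz$, and for $0<t<\infty$, $\mathscr{M}^y_tf:=\big(\mathscr{M}^y(|f|^t)\big)^{1/t}$. $C$ depends only on $n,p,t$. *)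

theory Defs
  imports "HOL-Analysis.Analysis"
begin

text \<open>Real powers of extended nonnegative reals (for exponents r > 0): infinity stays infinity.\<close>
definition epow :: "ennreal \<Rightarrow> real \<Rightarrow> ennreal" where
  "epow a r = (if a = \<infinity> then \<infinity> else ennreal (enn2real a powr r))"

definition dyadic_cube :: "int \<Rightarrow> (int ^ 'n) \<Rightarrow> (real ^ 'n::finite) set" where
  "dyadic_cube k j = {x. \<forall>i. 2 powr k * real_of_int (j $ i) \<le> x $ i
                            \<and> x $ i < 2 powr k * (real_of_int (j $ i) + 1)}"

definition dyadic_side :: "int \<Rightarrow> real" where
  "dyadic_side k = 2 powr k"

definition shifted_cube :: "int \<Rightarrow> (int ^ 'n) \<Rightarrow> (real ^ 'n::finite) \<Rightarrow> (real ^ 'n) set" where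
  "shifted_cube k j y = (\<lambda>z. z + dyadic_side k *\<^sub>R y) ` dyadic_cube k j"

definition shifted_max :: "(real ^ 'n::finite) \<Rightarrow> (real ^ 'n \<Rightarrow> real) \<Rightarrow> real ^ 'n \<Rightarrow> ennreal" where
  "shifted_max y f x =
     (SUP kj \<in> {(k, j). x \<in> dyadic_cube k j}.
        ennreal (1 / measure lebesgue (dyadic_cube (fst kj) (snd kj))) *
        (\<integral>\<^sup>+ z. ennreal \<bar>f z\<bar> * indicator (shifted_cube (fst kj) (snd kj) y) z \<partial>lebesgue))"

definition shifted_max_t :: "(real ^ 'n::finite) \<Rightarrow> real \<Rightarrow> (real ^ 'n \<Rightarrow> real) \<Rightarrow> real ^ 'n \<Rightarrow> ennreal" where
  "shifted_max_t y t f x = epow (shifted_max y (\<lambda>z. \<bar>f z\<bar> powr t) x) (1 / t)"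

definition Lp_norm :: "real \<Rightarrow> (real ^ 'n::finite \<Rightarrow> ennreal) \<Rightarrow> ennreal" where
  "Lp_norm p g = epow (\<integral>\<^sup>+ x. epow (g x) p \<partial>lebesgue) (1 / p)"

definition in_Lp :: "real \<Rightarrow> (real ^ 'n::finite \<Rightarrow> real) \<Rightarrow> bool" where
  "in_Lp p f \<longleftrightarrow> f \<in> borel_measurable lebesgue
      \<and> (\<integral>\<^sup>+ x. ennreal (\<bar>f x\<bar> powr p) \<partial>lebesgue) < \<infinity>"

end

theory Submission imports Defs begin

definition hbox :: "real^'n::finite \<Rightarrow> real^'n \<Rightarrow> (real^'n) set" where
  "hbox a b = {x. \<forall>i. a$i \<le> x$i \<and> x$i < b$i}"

lemma hbox_borel: fixes a b :: "real^'n::finite" shows "hbox a b \<in> sets borel"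
proof -
  have "hbox a b = (\<Inter>i::'n. {x::real^'n. a$i \<le> x$i} \<inter> {x. x$i < b$i})" by (auto simp: hbox_def)
  moreover have "closed {x::real^'n. a$i \<le> x$i}" for i
    using closed_halfspace_component_ge_cart[of "a$i" i] by simp
  moreover have "open {x::real^'n. x$i < b$i}" for i
    by (rule open_halfspace_component_lt_cart)
  ultimately show ?thesis
    by (auto intro!: sets.finite_INT sets.Int borel_closed borel_open)
qed

lemma hbox_lebesgue: fixes a b :: "real^'n::finite" shows "hbox a b \<in> sets lebesgue"
  using hbox_borel by (metis sets_completionI_sets sets_lborel)

lemma emeasure_hbox:
  fixes a b :: "real^'n::finite"
  assumes "\<And>i. a$i \<le> b$i"
  shows "emeasure lebesgue (hbox a b) = ennreal (\<Prod>i\<in>UNIV. b$i - a$i)"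
proof -
  have P: "emeasure lborel (cbox a b) = ennreal (\<Prod>i\<in>UNIV. b$i - a$i)"
  proof -
    have "a \<in> cbox a b" using assms by (simp add: mem_box_cart)
    then have "cbox a b \<noteq> {}" by auto
    then show ?thesis
      using emeasure_lborel_cbox_finite[of a b] emeasure_eq_ennreal_measure[of lborel "cbox a b"]
      by (simp add: content_cbox_cart)
  qed
  have Q: "emeasure lborel (box a b) = ennreal (\<Prod>i\<in>UNIV. b$i - a$i)"
    using P by (metis emeasure_lborel_box_eq emeasure_lborel_cbox_eq)
  have "emeasure lborel (hbox a b) \<le> emeasure lborel (cbox a b)"
    by (rule emeasure_mono) (auto simp: hbox_def mem_box_cart less_imp_le)
  moreover have "emeasure lborel (box a b) \<le> emeasure lborel (hbox a b)"
    by (rule emeasure_mono) (auto simp: hbox_def mem_box_cart hbox_borel less_imp_le)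
  ultimately have "emeasure lborel (hbox a b) = ennreal (\<Prod>i\<in>UNIV. b$i - a$i)"
    using P Q by auto
  moreover have "hbox a b \<in> sets lborel" using hbox_borel[of a b] by simp
  ultimately show ?thesis by (simp add: emeasure_completion)
qed

definition idx :: "int \<Rightarrow> real^'n::finite \<Rightarrow> int^'n" where
  "idx k x = (\<chi> i. \<lfloor>x$i / 2 powr k\<rfloor>)"

definition rv :: "int^'n::finite \<Rightarrow> real^'n" where
  "rv m = (\<chi> i. real_of_int (m$i))"

definition vol :: "nat \<Rightarrow> int \<Rightarrow> real" where
  "vol n k = (2 powr k) ^ n"

lemma mem_cube_idx: "x \<in> dyadic_cube k j \<longleftrightarrow> idx k x = j"
proof -
  have "(2 powr k * real_of_int (j $ i) \<le> x $ i \<and> x $ i < 2 powr k * (real_of_int (j $ i) + 1))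
      \<longleftrightarrow> \<lfloor>x$i / 2 powr k\<rfloor> = j$i" for i
  proof -
    have p: "2 powr k > 0" by simp
    show ?thesis unfolding floor_eq_iff
      using p by (simp add: pos_le_divide_eq pos_divide_less_eq mult.commute)
  qed
  then show ?thesis unfolding dyadic_cube_def idx_def by (auto simp: vec_eq_iff)
qed

lemma cube_hbox: "dyadic_cube k j = hbox (\<chi> i. 2 powr k * real_of_int (j $ i)) (\<chi> i. 2 powr k * (real_of_int (j $ i) + 1))"
  unfolding dyadic_cube_def hbox_def by auto

lemma cube_lebesgue[measurable]: "dyadic_cube k j \<in> sets lebesgue"
  unfolding cube_hbox by (rule hbox_lebesgue)

lemma emeasure_cube: "emeasure lebesgue (dyadic_cube k (j::int^'n::finite)) = ennreal (vol CARD('n) k)"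
  unfolding cube_hbox vol_def
  by (subst emeasure_hbox) (auto simp: algebra_simps)

lemma measure_cube: "measure lebesgue (dyadic_cube k (j::int^'n::finite)) = vol CARD('n) k"
  unfolding measure_def emeasure_cube by (simp add: vol_def)

lemma vol_pos: "vol n k > 0" by (simp add: vol_def)

lemma idx_up: "idx (k + int d) x = (\<chi> i. (idx k x $ i) div 2^d)"
proof -
  have "\<lfloor>x$i / 2 powr (k + int d)\<rfloor> = \<lfloor>x$i / 2 powr k\<rfloor> div 2^d" for i
  proof -
    have h: "2 powr (k + int d) = 2 powr k * real_of_int ((2::int)^d)"
      by (simp add: powr_add powr_realpow)
    have "x$i / 2 powr (k + int d) = (x$i / 2 powr k) / real_of_int ((2::int)^d)"
      unfolding h by (simp only: divide_divide_eq_left)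
    then show ?thesis by (simp only:) (rule floor_divide_real_eq_div, simp)
  qed
  then show ?thesis unfolding idx_def by (simp add: vec_eq_iff)
qed

lemma idx_shift: "idx k (x + 2 powr k *\<^sub>R rv m) = idx k x + m"
proof -
  have "\<lfloor>(x$i + 2 powr k * real_of_int (m$i)) / 2 powr k\<rfloor> = \<lfloor>x$i / 2 powr k\<rfloor> + m$i" for i
  proof -
    have "(x$i + 2 powr k * real_of_int (m$i)) / 2 powr k = x$i / 2 powr k + real_of_int (m$i)"
      by (simp add: field_simps)
    then show ?thesis by simp
  qed
  then show ?thesis unfolding idx_def rv_def by (simp add: vec_eq_iff)
qed

definition anc :: "int \<times> (int^'n::finite) \<Rightarrow> nat \<Rightarrow> int \<times> (int^'n)" where
  "anc R d = (fst R + int d, \<chi> i. snd R $ i div 2^d)"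

lemma anc_0[simp]: "anc R 0 = R"
  by (simp add: anc_def vec_eq_iff)

lemma anc_anc: "anc (anc R a) b = anc R (a + b)"
proof -
  have "snd R $ i div 2^a div 2^b = snd R $ i div 2^(a+b)" for i
    by (simp add: power_add zdiv_zmult2_eq)
  then show ?thesis by (simp add: anc_def vec_eq_iff)
qed

lemma cube_anc: "x \<in> dyadic_cube k r \<Longrightarrow> x \<in> dyadic_cube (fst (anc (k,r) d)) (snd (anc (k,r) d))"
  by (simp add: mem_cube_idx anc_def idx_up)

definition Tset :: "int \<Rightarrow> int^'n::finite \<Rightarrow> int^'n \<Rightarrow> nat \<Rightarrow> (real^'n) set" where
  "Tset l r m d = {x. idx l (x + 2 powr (l - int d) *\<^sub>R rv m) = r}"

definition Bset :: "int \<Rightarrow> int^'n::finite \<Rightarrow> (real^'n) set" where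
  "Bset l r = hbox (\<chi> i. 2 powr l * (real_of_int (r$i) - 1)) (\<chi> i. 2 powr l * (real_of_int (r$i) + 2))"

lemma Tset_hbox: "Tset l r m d = hbox ((\<chi> i. 2 powr l * real_of_int (r $ i)) - 2 powr (l - int d) *\<^sub>R rv m)
     ((\<chi> i. 2 powr l * (real_of_int (r $ i) + 1)) - 2 powr (l - int d) *\<^sub>R rv m)"
proof -
  have "x \<in> Tset l r m d \<longleftrightarrow> x + 2 powr (l - int d) *\<^sub>R rv m \<in> dyadic_cube l r" for x
    by (simp add: Tset_def mem_cube_idx)
  then show ?thesis unfolding cube_hbox hbox_def by (auto simp: algebra_simps)
qed

lemma Tset_lebesgue[measurable]: "Tset l r m d \<in> sets lebesgue"
  unfolding Tset_hbox by (rule hbox_lebesgue)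

lemma emeasure_Tset: "emeasure lebesgue (Tset l r m d :: (real^'n::finite) set) = ennreal (vol CARD('n) l)"
  unfolding Tset_hbox vol_def
  by (subst emeasure_hbox) (auto simp: algebra_simps)

lemma Bset_lebesgue[measurable]: "Bset l r \<in> sets lebesgue"
  unfolding Bset_def by (rule hbox_lebesgue)

lemma emeasure_Bset: "emeasure lebesgue (Bset l r :: (real^'n::finite) set) = ennreal (3 ^ CARD('n) * vol CARD('n) l)"
  unfolding Bset_def vol_def
  by (subst emeasure_hbox) (auto simp: algebra_simps power_mult_distrib)

lemma Tset_sub_Bset:
  assumes "\<And>i. \<bar>m$i\<bar> \<le> 2^L" "L \<le> d"
  shows "Tset l r m d \<subseteq> Bset l r"
proof
  fix x assume "x \<in> Tset l r m d"
  then have x: "x + 2 powr (l - int d) *\<^sub>R rv m \<in> dyadic_cube l r"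
    by (simp add: Tset_def mem_cube_idx)
  have "\<bar>2 powr (l - int d) * real_of_int (m$i)\<bar> \<le> 2 powr l" for i
  proof -
    have "\<bar>real_of_int (m$i)\<bar> \<le> 2 powr L"
      using assms(1)[of i] by (simp add: powr_realpow) (metis of_int_abs of_int_le_iff of_int_numeral of_int_power)
    also have "2 powr L \<le> 2 powr d" using assms(2) by simp
    finally have "2 powr (l - int d) * \<bar>real_of_int (m$i)\<bar> \<le> 2 powr (l - int d) * 2 powr d"
      by (intro mult_left_mono) auto
    also have "\<dots> = 2 powr l" by (simp add: powr_add[symmetric])
    finally show ?thesis by (simp add: abs_mult)
  qed
  then show "x \<in> Bset l r"
    using x unfolding dyadic_cube_def Bset_def hbox_def rv_def
    by (auto simp: algebra_simps abs_le_iff) (smt (verit))+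
qed

lemma count_space_term_le:
  fixes f :: "'a \<Rightarrow> ennreal"
  assumes "j \<in> I"
  shows "f j \<le> (\<integral>\<^sup>+i. f i \<partial>count_space I)"
proof -
  have "f j = (\<integral>\<^sup>+i. f i \<partial>count_space {j})"
    by (simp add: nn_integral_count_space_finite)
  also have "\<dots> = (\<integral>\<^sup>+i. f i * indicator {j} i \<partial>count_space UNIV)"
    by (rule nn_integral_count_space_indicator) simp
  also have "\<dots> \<le> (\<integral>\<^sup>+i. f i * indicator I i \<partial>count_space UNIV)"
    using assms by (intro nn_integral_mono) (auto split: split_indicator)
  also have "\<dots> = (\<integral>\<^sup>+i. f i \<partial>count_space I)"
    by (cases "I = UNIV") (simp_all add: nn_integral_count_space_indicator)
  finally show ?thesis .
qed

lemma emeasure_UN_le: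
  assumes "countable I" and X: "\<And>i. i \<in> I \<Longrightarrow> X i \<in> sets M"
  shows "emeasure M (\<Union>(X ` I)) \<le> (\<integral>\<^sup>+i. emeasure M (X i) \<partial>count_space I)"
proof -
  have U: "\<Union>(X ` I) \<in> sets M" using assms by (intro sets.countable_UN') auto
  have "emeasure M (\<Union>(X ` I)) = (\<integral>\<^sup>+x. indicator (\<Union>(X ` I)) x \<partial>M)"
    using U by simp
  also have "\<dots> \<le> (\<integral>\<^sup>+x. (\<integral>\<^sup>+i. indicator (X i) x \<partial>count_space I) \<partial>M)"
  proof (rule nn_integral_mono)
    fix x assume "x \<in> space M"
    show "indicator (\<Union>(X ` I)) x \<le> (\<integral>\<^sup>+i. indicator (X i) x \<partial>count_space I)"
    proof (cases "x \<in> \<Union>(X ` I)")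
      case True
      then obtain j where j: "j \<in> I" "x \<in> X j" by auto
      have "(indicator (X j) x :: ennreal) \<le> (\<integral>\<^sup>+i. indicator (X i) x \<partial>count_space I)"
        by (rule count_space_term_le[OF j(1), where f="\<lambda>i. indicator (X i) x"])
      then show ?thesis using True j by simp
    qed simp
  qed
  also have "\<dots> = (\<integral>\<^sup>+i. (\<integral>\<^sup>+x. indicator (X i) x \<partial>M) \<partial>count_space I)"
    using assms by (intro nn_integral_count_space_nn_integral) auto
  also have "\<dots> = (\<integral>\<^sup>+i. emeasure M (X i) \<partial>count_space I)"
    using X by (intro nn_integral_cong) auto
  finally show ?thesis .
qed

lemma int_lt_2powr: "0 \<le> k \<Longrightarrow> real_of_int k < 2 powr k"
proof -
  assume "0 \<le> k"
  then obtain j where "k = int j" by (metis nonneg_eq_int)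
  then show ?thesis by (simp add: powr_realpow)
qed

lemma vol_ge: "n \<ge> 1 \<Longrightarrow> 0 \<le> k \<Longrightarrow> 2 powr k \<le> vol n k"
proof -
  assume n: "n \<ge> 1" and k: "0 \<le> k"
  have "1 \<le> 2 powr k" using k by (intro ge_one_powr_ge_zero) auto
  then have "(2 powr k)^1 \<le> (2 powr k)^n" using n by (intro power_increasing) auto
  then show ?thesis by (simp add: vol_def)
qed

lemma weak_int:
  fixes h :: "real^'n::finite \<Rightarrow> real" and m :: "int^'n" and \<mu> :: real and L :: nat
  assumes hm[measurable]: "h \<in> borel_measurable lebesgue" and hnn: "\<And>z. 0 \<le> h z"
    and \<mu>: "0 < \<mu>" and mL: "\<And>i. \<bar>m$i\<bar> \<le> 2^L"
  shows "\<exists>W\<in>sets lebesgue. {x. \<exists>k. ennreal (\<mu> * vol CARD('n) k) <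
            (\<integral>\<^sup>+z. ennreal (h z) * indicator (dyadic_cube k (idx k x + m)) z \<partial>lebesgue)} \<subseteq> W
          \<and> emeasure lebesgue W \<le> ennreal ((3^CARD('n) + real L) / \<mu>) * (\<integral>\<^sup>+z. ennreal (h z) \<partial>lebesgue)"
proof -
  define n where "n = CARD('n)"
  have n1: "n \<ge> 1" unfolding n_def by (simp add: Suc_le_eq)
  define I where "I = (\<integral>\<^sup>+z. ennreal (h z) \<partial>lebesgue)"
  define c where "c = (3^CARD('n) + real L) / \<mu>"
  have c: "c > 0" unfolding c_def using \<mu> by (intro divide_pos_pos) (auto intro: add_pos_nonneg)
  define Bad where "Bad = {x. \<exists>k. ennreal (\<mu> * vol CARD('n) k) <
            (\<integral>\<^sup>+z. ennreal (h z) * indicator (dyadic_cube k (idx k x + m)) z \<partial>lebesgue)}"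
  show "\<exists>W\<in>sets lebesgue. Bad \<subseteq> W \<and> emeasure lebesgue W \<le> ennreal c * I"
  proof (cases "I = \<infinity>")
    case True
    then show ?thesis using c
      by (intro bexI[of _ UNIV]) (auto simp: I_def[symmetric] c_def[symmetric] ennreal_mult_top)
  next
    case False
    define N where "N = density lebesgue (\<lambda>z. ennreal (h z))"
    have sN[simp]: "sets N = sets lebesgue" by (simp add: N_def)
    have Nint: "(\<integral>\<^sup>+z. ennreal (h z) * indicator (dyadic_cube k r) z \<partial>lebesgue) = emeasure N (dyadic_cube k r)" for k r
      unfolding N_def by (rule emeasure_density[symmetric]) auto
    have NI: "emeasure N A \<le> I" for A
    proof -
      have "emeasure N A \<le> emeasure N (space N)" by (rule emeasure_space)
      also have "\<dots> = I" unfolding N_def I_def by (simp add: emeasure_density)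
      finally show ?thesis .
    qed
    define Q where "Q R = dyadic_cube (fst R) (snd R)" for R :: "int \<times> (int^'n)"
    define S where "S = {R. ennreal (\<mu> * vol n (fst R)) < emeasure N (Q R)}"
    define K0 :: int where "K0 = \<lceil>enn2real I / \<mu>\<rceil>"
    have bound: "fst R \<le> max 0 K0" if "R \<in> S" for R
    proof (rule ccontr)
      assume "\<not> fst R \<le> max 0 K0"
      then have k0: "0 \<le> fst R" "K0 < fst R" by auto
      have "enn2real I / \<mu> \<le> K0" unfolding K0_def by simp
      also have "\<dots> < fst R" using k0 by simp
      also have "\<dots> < 2 powr (fst R)" using k0 by (intro int_lt_2powr) auto
      also have "\<dots> \<le> vol n (fst R)" using k0 n1 by (intro vol_ge) auto
      finally have "enn2real I < \<mu> * vol n (fst R)" using \<mu> by (simp add: pos_divide_less_eq mult.commute)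
      have "I = ennreal (enn2real I)" using False by (simp add: ennreal_enn2real_if)
      also have "\<dots> \<le> ennreal (\<mu> * vol n (fst R))"
        by (rule ennreal_leI) (use \<open>enn2real I < \<mu> * vol n (fst R)\<close> in simp)
      finally have "I \<le> ennreal (\<mu> * vol n (fst R))" .
      also have "\<dots> < emeasure N (Q R)" using that by (simp add: S_def)
      also have "\<dots> \<le> I" by (rule NI)
      finally show False by simp
    qed
    define Smax where "Smax = {R\<in>S. \<forall>d>0. anc R d \<notin> S}"
    have tomax: "\<exists>d. anc R d \<in> Smax" if R: "R \<in> S" for R
    proof -
      define D where "D = {d. anc R d \<in> S}"
      have D0: "0 \<in> D" using R by (simp add: D_def)
      have Db: "d \<le> nat (max 0 K0 - fst R)" if "d \<in> D" for d
        using bound[of "anc R d"] that by (simp add: D_def anc_def)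
      have fD: "finite D" using Db by (meson finite_nat_set_iff_bounded_le)
      define d0 where "d0 = Max D"
      have "d0 \<in> D" unfolding d0_def using fD D0 by (intro Max_in) auto
      moreover have "anc (anc R d0) d' \<notin> S" if "d' > 0" for d'
      proof
        assume "anc (anc R d0) d' \<in> S"
        then have "d0 + d' \<in> D" by (simp add: D_def anc_anc)
        then have "d0 + d' \<le> d0" using Max_ge[OF fD] unfolding d0_def by blast
        with that show False by simp
      qed
      ultimately show ?thesis by (auto simp: Smax_def D_def)
    qed
    have same: "R1 = R2" if "R1 \<in> Smax" "R2 \<in> Smax" "fst R1 \<le> fst R2" "x \<in> Q R1" "x \<in> Q R2" for R1 R2 x
    proof -
      define d where "d = nat (fst R2 - fst R1)"
      have fst2: "fst R2 = fst R1 + int d" using that(3) by (simp add: d_def)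
      have "snd R2 = idx (fst R2) x" using that(5) by (simp add: Q_def mem_cube_idx)
      also have "\<dots> = (\<chi> i. idx (fst R1) x $ i div 2^d)" unfolding fst2 by (rule idx_up)
      also have "\<dots> = (\<chi> i. snd R1 $ i div 2^d)" using that(4) by (simp add: Q_def mem_cube_idx)
      finally have "R2 = anc R1 d" using fst2 by (simp add: anc_def prod_eq_iff)
      moreover have "d = 0"
        using that(1,2) \<open>R2 = anc R1 d\<close> by (auto simp: Smax_def)
      ultimately show ?thesis by simp
    qed
    have disj: "disjoint_family_on Q Smax"
      unfolding disjoint_family_on_def
    proof (intro ballI impI)
      fix R1 R2 assume R: "R1 \<in> Smax" "R2 \<in> Smax" "R1 \<noteq> R2"
      show "Q R1 \<inter> Q R2 = {}"
      proof (rule ccontr)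
        assume "Q R1 \<inter> Q R2 \<noteq> {}"
        then obtain x where "x \<in> Q R1" "x \<in> Q R2" by auto
        then show False using same[of R1 R2 x] same[of R2 R1 x] R by (cases "fst R1 \<le> fst R2") auto
      qed
    qed
    have cS: "countable Smax" by (rule countable_subset[of _ UNIV]) auto
    define V where "V R = Bset (fst R) (snd R) \<union> (\<Union>d\<in>{..<L}. Tset (fst R) (snd R) m d)" for R
    have Vm: "V R \<in> sets lebesgue" for R
      unfolding V_def by (intro sets.Un sets.finite_UN) auto
    define W where "W = (\<Union>R\<in>Smax. V R)"
    have Wm: "W \<in> sets lebesgue" unfolding W_def using cS Vm by (intro sets.countable_UN') auto
    have cover: "Bad \<subseteq> W"
    proof
      fix x assume "x \<in> Bad"
      then obtain k where k: "(k, idx k x + m) \<in> S"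
        by (auto simp: Bad_def S_def Q_def Nint n_def)
      then obtain d where d: "anc (k, idx k x + m) d \<in> Smax" using tomax by blast
      define r where "r = snd (anc (k, idx k x + m) d)"
      have Rf: "anc (k, idx k x + m) d = (k + int d, r)" by (simp add: anc_def r_def)
      have "idx (k + int d) (x + 2 powr k *\<^sub>R rv m) = (\<chi> i. (idx k x + m) $ i div 2^d)"
        by (simp add: idx_up idx_shift)
      then have "x \<in> Tset (k + int d) r m d" by (simp add: Tset_def r_def anc_def)
      then have "x \<in> V (k + int d, r)"
      proof (cases "d < L")
        case True
        then show ?thesis using \<open>x \<in> Tset (k + int d) r m d\<close> by (auto simp: V_def)
      next
        case False
        then have "x \<in> Bset (k + int d) r" using Tset_sub_Bset[of m L d] mL \<open>x \<in> Tset (k + int d) r m d\<close> by auto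
        then show ?thesis by (auto simp: V_def)
      qed
      then show "x \<in> W" using d Rf by (auto simp: W_def)
    qed
    have "emeasure lebesgue W \<le> (\<integral>\<^sup>+R. emeasure lebesgue (V R) \<partial>count_space Smax)"
      unfolding W_def using cS Vm by (intro emeasure_UN_le) auto
    also have "\<dots> \<le> (\<integral>\<^sup>+R. ennreal c * emeasure N (Q R) \<partial>count_space Smax)"
    proof (rule nn_integral_mono)
      fix R assume "R \<in> space (count_space Smax)"
      then have RS: "R \<in> S" by (simp add: Smax_def)
      have "emeasure lebesgue (V R) \<le> emeasure lebesgue (Bset (fst R) (snd R)) + emeasure lebesgue (\<Union>d\<in>{..<L}. Tset (fst R) (snd R) m d)"
        unfolding V_def by (intro emeasure_subadditive) (auto intro: sets.finite_UN)
      also have "emeasure lebesgue (\<Union>d\<in>{..<L}. Tset (fst R) (snd R) m d) \<le> (\<Sum>d\<in>{..<L}. emeasure lebesgue (Tset (fst R) (snd R) m d))"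
        by (intro emeasure_subadditive_finite) auto
      also have "\<dots> = ennreal (real L * vol n (fst R))"
        using vol_pos[of n "fst R"] by (simp add: emeasure_Tset n_def ennreal_of_nat_eq_real_of_nat ennreal_mult)
      also have "emeasure lebesgue (Bset (fst R) (snd R)) = ennreal (3^n * vol n (fst R))"
        by (simp add: emeasure_Bset n_def)
      also have "ennreal (3^n * vol n (fst R)) + ennreal (real L * vol n (fst R)) = ennreal c * ennreal (\<mu> * vol n (fst R))"
      proof -
        have v: "0 < vol n (fst R)" by (rule vol_pos)
        have e: "3^n * vol n (fst R) + real L * vol n (fst R) = c * (\<mu> * vol n (fst R))"
          using \<mu> by (simp add: c_def n_def field_simps)
        have "ennreal (3^n * vol n (fst R)) + ennreal (real L * vol n (fst R)) = ennreal (3^n * vol n (fst R) + real L * vol n (fst R))"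
          by (rule ennreal_plus[symmetric]) (use v in auto)
        also have "\<dots> = ennreal (c * (\<mu> * vol n (fst R)))" by (simp only: e)
        also have "\<dots> = ennreal c * ennreal (\<mu> * vol n (fst R))"
          by (rule ennreal_mult) (use v c \<mu> in auto)
        finally show ?thesis .
      qed
      also have "\<dots> \<le> ennreal c * emeasure N (Q R)"
        using RS by (intro mult_left_mono) (auto simp: S_def intro: less_imp_le)
      finally show "emeasure lebesgue (V R) \<le> ennreal c * emeasure N (Q R)" by simp
    qed
    also have "\<dots> = ennreal c * (\<integral>\<^sup>+R. emeasure N (Q R) \<partial>count_space Smax)"
      by (rule nn_integral_cmult) simp
    also have "(\<integral>\<^sup>+R. emeasure N (Q R) \<partial>count_space Smax) = emeasure N (\<Union>(Q ` Smax))"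
      by (intro emeasure_UN_countable[symmetric] cS disj) (auto simp: Q_def)
    also have "ennreal c * emeasure N (\<Union>(Q ` Smax)) \<le> ennreal c * I" by (intro mult_left_mono NI) simp
    finally have le: "emeasure lebesgue W \<le> ennreal c * I" .
    show ?thesis
    proof (rule bexI[of _ W])
      show "Bad \<subseteq> W \<and> emeasure lebesgue W \<le> ennreal c * I" using cover le by (rule conjI)
    qed (fact Wm)
  qed
qed

definition fl :: "real^'n::finite \<Rightarrow> int^'n" where
  "fl y = (\<chi> i. \<lfloor>y$i\<rfloor>)"

definition ev :: "'n::finite set \<Rightarrow> int^'n" where
  "ev S = (\<chi> i. if i \<in> S then 1 else 0)"

lemma card_sets: "card (UNIV :: 'n::finite set set) = 2 ^ CARD('n)"
  using card_Pow[of "UNIV :: 'n set"] by (simp add: Pow_UNIV)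

lemma shifted_hbox: "shifted_cube k j y = hbox ((\<chi> i. 2 powr k * real_of_int (j $ i)) + dyadic_side k *\<^sub>R y)
    ((\<chi> i. 2 powr k * (real_of_int (j $ i) + 1)) + dyadic_side k *\<^sub>R y)"
proof -
  have "w \<in> shifted_cube k j y \<longleftrightarrow> w - dyadic_side k *\<^sub>R y \<in> dyadic_cube k j" for w
    unfolding shifted_cube_def by (auto simp: image_iff intro!: bexI[of _ "w - dyadic_side k *\<^sub>R y"])
  then show ?thesis unfolding cube_hbox hbox_def by (auto simp: algebra_simps)
qed

lemma shifted_lebesgue[measurable]: "shifted_cube k j y \<in> sets lebesgue"
  unfolding shifted_hbox by (rule hbox_lebesgue)

lemma emeasure_shifted: "emeasure lebesgue (shifted_cube k j (y::real^'n::finite)) = ennreal (vol CARD('n) k)"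
  unfolding shifted_hbox vol_def
  by (subst emeasure_hbox) (auto simp: algebra_simps)

lemma shifted_cover: "shifted_cube k j y \<subseteq> (\<Union>S. dyadic_cube k (j + fl y + ev S))"
proof
  fix w assume "w \<in> shifted_cube k j y"
  then obtain z where z: "z \<in> dyadic_cube k j" and w: "w = z + 2 powr k *\<^sub>R y"
    by (auto simp: shifted_cube_def dyadic_side_def)
  define S where "S = {i. idx k w $ i \<noteq> j$i + \<lfloor>y$i\<rfloor>}"
  have "idx k w $ i = j$i + \<lfloor>y$i\<rfloor> + ev S $ i" for i
  proof -
    have zi: "\<lfloor>z$i / 2 powr k\<rfloor> = j$i" using z by (simp add: mem_cube_idx idx_def vec_eq_iff)
    have "w$i / 2 powr k = z$i / 2 powr k + y$i" using w by (simp add: field_simps)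
    then have "idx k w $ i = \<lfloor>z$i / 2 powr k + y$i\<rfloor>" by (simp add: idx_def)
    then have "idx k w $ i = j$i + \<lfloor>y$i\<rfloor> \<or> idx k w $ i = j$i + \<lfloor>y$i\<rfloor> + 1"
      using floor_add[of "z$i / 2 powr k" "y$i"] zi by (auto split: if_splits)
    then show ?thesis by (auto simp: ev_def S_def)
  qed
  then have "idx k w = j + fl y + ev S" by (simp add: vec_eq_iff fl_def)
  then show "w \<in> (\<Union>S. dyadic_cube k (j + fl y + ev S))" by (auto simp: mem_cube_idx)
qed

lemma ennreal_lt_div:
  assumes "0 < v" "0 \<le> a" "ennreal a < ennreal (1 / v) * A"
  shows "ennreal (a * v) < A"
proof (cases A)
  case (real r)
  then have "ennreal a < ennreal (r / v)" using assms by (simp add: ennreal_mult[symmetric])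
  then have "a < r / v" using assms by (simp add: ennreal_less_iff)
  then have "a * v < r" using assms by (simp add: pos_less_divide_eq)
  then show ?thesis using real assms by (simp add: ennreal_less_iff)
qed simp

lemma bad_My:
  fixes g :: "real^'n::finite \<Rightarrow> real" and y :: "real^'n"
  assumes gm[measurable]: "g \<in> borel_measurable lebesgue" and gnn: "\<And>z. 0 \<le> g z" and lam: "0 < lam"
  defines "h \<equiv> (\<lambda>z. if lam / 2 < g z then g z else 0)"
  shows "{x. ennreal lam < shifted_max y g x} \<subseteq> (\<Union>S. {x. \<exists>k. ennreal (lam / (2 * 2^CARD('n)) * vol CARD('n) k) <
      (\<integral>\<^sup>+z. ennreal (h z) * indicator (dyadic_cube k (idx k x + (fl y + ev S))) z \<partial>lebesgue)})"
proof
  fix x assume "x \<in> {x. ennreal lam < shifted_max y g x}"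
  then obtain k j where kj: "x \<in> dyadic_cube k j"
    and lt: "ennreal lam < ennreal (1 / measure lebesgue (dyadic_cube k j)) *
        (\<integral>\<^sup>+ z. ennreal \<bar>g z\<bar> * indicator (shifted_cube k j y) z \<partial>lebesgue)"
    unfolding shifted_max_def by (auto simp: less_SUP_iff)
  define v where "v = vol CARD('n) k"
  have v: "0 < v" unfolding v_def by (rule vol_pos)
  have j: "j = idx k x" using kj by (simp add: mem_cube_idx)
  define A where "A = (\<integral>\<^sup>+ z. ennreal (g z) * indicator (shifted_cube k j y) z \<partial>lebesgue)"
  define B where "B = (\<integral>\<^sup>+ z. ennreal (h z) * indicator (shifted_cube k j y) z \<partial>lebesgue)"
  have hm[measurable]: "h \<in> borel_measurable lebesgue" unfolding h_def by measurable
  have "ennreal (lam * v) < A"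
    using lt v lam gnn unfolding A_def v_def by (intro ennreal_lt_div) (auto simp: measure_cube)
  also have "A \<le> (\<integral>\<^sup>+ z. ennreal (h z) * indicator (shifted_cube k j y) z + ennreal (lam/2) * indicator (shifted_cube k j y) z \<partial>lebesgue)"
    unfolding A_def
  proof (rule nn_integral_mono)
    fix z
    have "ennreal (g z) \<le> ennreal (h z) + ennreal (lam/2)"
    proof (cases "lam / 2 < g z")
      case True then show ?thesis by (simp add: h_def)
    next
      case False then have "ennreal (g z) \<le> ennreal (lam/2)" by (intro ennreal_leI) simp
      then show ?thesis using False by (simp add: h_def)
    qed
    then show "ennreal (g z) * indicator (shifted_cube k j y) z \<le> ennreal (h z) * indicator (shifted_cube k j y) z + ennreal (lam/2) * indicator (shifted_cube k j y) z"
      by (auto split: split_indicator)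
  qed
  also have "\<dots> = B + ennreal (lam/2) * emeasure lebesgue (shifted_cube k j y)"
    unfolding B_def by (subst nn_integral_add) (auto simp: nn_integral_cmult_indicator)
  also have "\<dots> = B + ennreal (lam/2 * v)"
    using lam v by (simp add: emeasure_shifted v_def ennreal_mult[symmetric])
  finally have "ennreal (lam * v) < B + ennreal (lam/2 * v)" .
  moreover have "ennreal (lam * v) = ennreal (lam/2 * v) + ennreal (lam/2 * v)"
    using lam v by (simp add: ennreal_plus[symmetric] del: ennreal_plus)
  ultimately have Bgt: "ennreal (lam/2 * v) < B"
    by (metis add.commute add_less_cancel_right ennreal_add_left_cancel_less)
  define BS where "BS S = (\<integral>\<^sup>+z. ennreal (h z) * indicator (dyadic_cube k (j + fl y + ev S)) z \<partial>lebesgue)" for S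
  have "B \<le> (\<integral>\<^sup>+z. (\<Sum>S\<in>UNIV. ennreal (h z) * indicator (dyadic_cube k (j + fl y + ev S)) z) \<partial>lebesgue)"
    unfolding B_def
  proof (rule nn_integral_mono)
    fix z
    show "ennreal (h z) * indicator (shifted_cube k j y) z \<le> (\<Sum>S\<in>UNIV. ennreal (h z) * indicator (dyadic_cube k (j + fl y + ev S)) z)"
    proof (cases "z \<in> shifted_cube k j y")
      case True
      then obtain S0 where S0: "z \<in> dyadic_cube k (j + fl y + ev S0)" using shifted_cover by blast
      have "ennreal (h z) * indicator (dyadic_cube k (j + fl y + ev S0)) z \<le> (\<Sum>S\<in>UNIV. ennreal (h z) * indicator (dyadic_cube k (j + fl y + ev S)) z)"
        by (rule member_le_sum) auto
      then show ?thesis using True S0 by simp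
    qed simp
  qed
  also have "\<dots> = (\<Sum>S\<in>UNIV. BS S)"
    unfolding BS_def by (rule nn_integral_sum) auto
  finally have Bsum: "B \<le> (\<Sum>S\<in>UNIV. BS S)" .
  have "\<exists>S. ennreal (lam / (2 * 2^CARD('n)) * v) < BS S"
  proof (rule ccontr)
    assume "\<not> ?thesis"
    then have "\<And>S. BS S \<le> ennreal (lam / (2 * 2^CARD('n)) * v)" by (simp add: not_less)
    then have "(\<Sum>S\<in>UNIV. BS S) \<le> (\<Sum>S\<in>(UNIV::'n set set). ennreal (lam / (2 * 2^CARD('n)) * v))"
      by (intro sum_mono) auto
    also have "\<dots> = of_nat (2^CARD('n)) * ennreal (lam / (2 * 2^CARD('n)) * v)"
      by (simp add: card_sets)
    also have "\<dots> = ennreal (lam/2 * v)"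
      using lam v by (simp add: ennreal_of_nat_eq_real_of_nat ennreal_mult[symmetric] del: ennreal_mult' of_nat_power) (simp add: field_simps)
    finally show False using Bsum Bgt by simp
  qed
  then obtain S where "ennreal (lam / (2 * 2^CARD('n)) * v) < BS S" by blast
  then show "x \<in> (\<Union>S. {x. \<exists>k. ennreal (lam / (2 * 2^CARD('n)) * vol CARD('n) k) <
      (\<integral>\<^sup>+z. ennreal (h z) * indicator (dyadic_cube k (idx k x + (fl y + ev S))) z \<partial>lebesgue)})"
    unfolding BS_def v_def j by (auto simp: add.assoc)
qed

definition Ly :: "real^'n::finite \<Rightarrow> nat" where
  "Ly y = nat \<lceil>log 2 (norm y + 2)\<rceil>"

lemma shift_bound: "\<bar>(fl y + ev S) $ i\<bar> \<le> 2 ^ Ly y"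
proof -
  have a: "\<bar>y$i\<bar> \<le> norm y" by (rule component_le_norm_cart)
  have b: "real_of_int \<lfloor>y$i\<rfloor> \<le> y$i" "y$i < real_of_int \<lfloor>y$i\<rfloor> + 1" by auto
  have a2: "y$i \<le> norm y" "- y$i \<le> norm y" using a by (auto simp: abs_le_iff)
  have e: "real_of_int ((fl y + ev S) $ i) = real_of_int \<lfloor>y$i\<rfloor> + (if i \<in> S then 1 else 0)"
    by (simp add: fl_def ev_def)
  have "\<bar>real_of_int ((fl y + ev S) $ i)\<bar> \<le> norm y + 2"
    unfolding e abs_le_iff using a2 b by (cases "i \<in> S") (simp_all, linarith+)
  also have "norm y + 2 = 2 powr (log 2 (norm y + 2))"
    by (rule powr_log_cancel[symmetric]) (auto intro: add_nonneg_pos)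
  also have "\<dots> \<le> 2 powr (Ly y)"
    unfolding Ly_def by (intro powr_mono) (auto simp: real_nat_ceiling_ge)
  also have "\<dots> = 2 ^ Ly y" by (simp add: powr_realpow)
  finally have "real_of_int \<bar>(fl y + ev S) $ i\<bar> \<le> real_of_int (2 ^ Ly y)" by simp
  then show ?thesis by (simp only: of_int_le_iff)
qed

definition Dy :: "real^'n::finite \<Rightarrow> real" where
  "Dy y = 2 * 4^CARD('n) * (3^CARD('n) + real (Ly y))"

lemma weak_My:
  fixes g :: "real^'n::finite \<Rightarrow> real" and y :: "real^'n"
  assumes gm[measurable]: "g \<in> borel_measurable lebesgue" and gnn: "\<And>z. 0 \<le> g z" and lam: "0 < lam"
  shows "\<exists>W\<in>sets lebesgue. {x. ennreal lam < shifted_max y g x} \<subseteq> W \<and>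
     emeasure lebesgue W \<le> ennreal (Dy y / lam) * (\<integral>\<^sup>+z. ennreal (if lam / 2 < g z then g z else 0) \<partial>lebesgue)"
proof -
  define h where "h = (\<lambda>z. if lam / 2 < g z then g z else 0)"
  have hm[measurable]: "h \<in> borel_measurable lebesgue" unfolding h_def by measurable
  have hnn: "0 \<le> h z" for z using gnn by (simp add: h_def)
  define \<mu> where "\<mu> = lam / (2 * 2^CARD('n))"
  have \<mu>: "0 < \<mu>" using lam by (simp add: \<mu>_def)
  define I where "I = (\<integral>\<^sup>+z. ennreal (h z) \<partial>lebesgue)"
  define c where "c = (3^CARD('n) + real (Ly y)) / \<mu>"
  define P where "P S = {x. \<exists>k. ennreal (\<mu> * vol CARD('n) k) <
            (\<integral>\<^sup>+z. ennreal (h z) * indicator (dyadic_cube k (idx k x + (fl y + ev S))) z \<partial>lebesgue)}" for S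
  have "\<forall>S. \<exists>W. W \<in> sets lebesgue \<and> P S \<subseteq> W \<and> emeasure lebesgue W \<le> ennreal c * I"
  proof
    fix S
    have "\<exists>W\<in>sets lebesgue. P S \<subseteq> W \<and> emeasure lebesgue W \<le> ennreal c * I"
      unfolding c_def I_def P_def using hm hnn \<mu> shift_bound by (rule weak_int)
    then show "\<exists>W. W \<in> sets lebesgue \<and> P S \<subseteq> W \<and> emeasure lebesgue W \<le> ennreal c * I"
      by (simp only: Bex_def)
  qed
  then have "\<exists>Wf. \<forall>S. Wf S \<in> sets lebesgue \<and> P S \<subseteq> Wf S \<and> emeasure lebesgue (Wf S) \<le> ennreal c * I"
    by (rule choice)
  then obtain Wf where H: "\<forall>S. Wf S \<in> sets lebesgue \<and> P S \<subseteq> Wf S \<and> emeasure lebesgue (Wf S) \<le> ennreal c * I"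
    by (elim exE)
  have Wf: "\<And>S. Wf S \<in> sets lebesgue" "\<And>S. P S \<subseteq> Wf S" "\<And>S. emeasure lebesgue (Wf S) \<le> ennreal c * I"
    using H by blast+
  define W where "W = (\<Union>S. Wf S)"
  have Wm: "W \<in> sets lebesgue" unfolding W_def using Wf(1) by auto
  have B: "{x. ennreal lam < shifted_max y g x} \<subseteq> (\<Union>S. P S)"
    using bad_My[OF gm gnn lam, of y] unfolding P_def h_def \<mu>_def .
  have cov: "{x. ennreal lam < shifted_max y g x} \<subseteq> W"
  proof
    fix x assume "x \<in> {x. ennreal lam < shifted_max y g x}"
    then obtain S where "x \<in> P S" using B by blast
    then have "x \<in> Wf S" using Wf(2) by blast
    then show "x \<in> W" unfolding W_def by blast
  qed
  have "emeasure lebesgue W \<le> (\<Sum>S\<in>UNIV. emeasure lebesgue (Wf S))"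
    unfolding W_def using Wf(1) by (intro emeasure_subadditive_finite) auto
  also have "\<dots> \<le> (\<Sum>S\<in>(UNIV::'n set set). ennreal c * I)"
    using Wf(3) by (intro sum_mono) auto
  also have "\<dots> = of_nat (2^CARD('n)) * (ennreal c * I)" by (simp add: card_sets)
  also have "\<dots> = ennreal (Dy y / lam) * I"
  proof -
    have "real (2^CARD('n)) * c = Dy y / lam"
      using lam by (simp add: c_def \<mu>_def Dy_def field_simps power_mult_distrib[symmetric])
    moreover have "c \<ge> 0" using \<mu> by (simp add: c_def)
    ultimately show ?thesis
      by (simp add: ennreal_of_nat_eq_real_of_nat mult.assoc[symmetric] ennreal_mult[symmetric] del: of_nat_power)
  qed
  finally have le: "emeasure lebesgue W \<le> ennreal (Dy y / lam) * I" .
  have Ieq: "I = (\<integral>\<^sup>+z. ennreal (if lam / 2 < g z then g z else 0) \<partial>lebesgue)" by (simp add: I_def h_def)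
  show ?thesis unfolding Ieq[symmetric] using Wm cov le by blast
qed

lemma geo_int:
  fixes q B :: real and K :: int
  assumes q: "0 < q" "q < 1" and B: "0 \<le> B"
  shows "(\<integral>\<^sup>+k. (if k \<le> K then ennreal (B * q ^ nat (K - k)) else 0) \<partial>count_space UNIV) = ennreal (B / (1 - q))"
proof -
  define G where "G k = (if k \<le> K then ennreal (B * q ^ nat (K - k)) else 0)" for k
  have "(\<integral>\<^sup>+k. G k \<partial>count_space UNIV) = (\<integral>\<^sup>+k. G k \<partial>count_space {..K})"
    by (rule nn_integral_count_space_eq) (auto simp: G_def)
  also have "\<dots> = (\<integral>\<^sup>+i. G (K - int i) \<partial>count_space UNIV)"
  proof (rule nn_integral_bij_count_space[symmetric])
    show "bij_betw (\<lambda>i::nat. K - int i) UNIV {..K}"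
      unfolding bij_betw_def
    proof
      show "inj (\<lambda>i::nat. K - int i)" by (auto simp: inj_on_def)
      show "range (\<lambda>i::nat. K - int i) = {..K}"
      proof (intro set_eqI iffI)
        fix k assume "k \<in> {..K}"
        then have "k = K - int (nat (K - k))" by simp
        then show "k \<in> range (\<lambda>i::nat. K - int i)" by blast
      qed auto
    qed
  qed
  also have "\<dots> = (\<integral>\<^sup>+i. ennreal (B * q ^ i) \<partial>count_space UNIV)"
    by (rule nn_integral_cong) (simp add: G_def)
  also have "\<dots> = (\<Sum>i. ennreal (B * q ^ i))" by (rule nn_integral_count_space_nat)
  also have "\<dots> = ennreal (\<Sum>i. B * q ^ i)"
    using q B by (intro suminf_ennreal2) (auto intro!: summable_mult summable_geometric)
  also have "(\<Sum>i. B * q ^ i) = B / (1 - q)"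
    using q by (simp add: suminf_mult suminf_geometric summable_geometric)
  finally show ?thesis unfolding G_def .
qed

definition cs :: "real \<Rightarrow> real" where
  "cs s = 2 powr (2 * s - 1) / (1 - 2 powr (1 - s))"

lemma point_b:
  fixes s v :: real
  assumes s: "1 < s" and v: "0 \<le> v"
  shows "(\<integral>\<^sup>+k. ennreal (2 powr ((real_of_int k + 1) * s) / 2 powr (real_of_int k) * (if 2 powr (real_of_int k) / 2 < v then v else 0)) \<partial>count_space (UNIV::int set))
     \<le> ennreal (cs s * v powr s)"
proof (cases "v = 0")
  case True
  then show ?thesis by simp
next
  case False
  then have v0: "0 < v" using v by simp
  define q where "q = 2 powr (1 - s)"
  have q: "0 < q" "q < 1" using s powr_less_cancel_iff[of 2 "1 - s" 0] by (auto simp: q_def)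
  define K where "K = \<lceil>log 2 v\<rceil>"
  define B where "B = 2 powr s * v * 2 powr ((s - 1) * K)"
  have B0: "0 \<le> B" using v by (simp add: B_def)
  have "(\<integral>\<^sup>+k. ennreal (2 powr ((real_of_int k + 1) * s) / 2 powr (real_of_int k) * (if 2 powr (real_of_int k) / 2 < v then v else 0)) \<partial>count_space (UNIV::int set))
      \<le> (\<integral>\<^sup>+k. (if k \<le> K then ennreal (B * q ^ nat (K - k)) else 0) \<partial>count_space UNIV)"
  proof (rule nn_integral_mono)
    fix k :: int
    show "ennreal (2 powr ((real_of_int k + 1) * s) / 2 powr (real_of_int k) * (if 2 powr (real_of_int k) / 2 < v then v else 0))
        \<le> (if k \<le> K then ennreal (B * q ^ nat (K - k)) else 0)"
    proof (cases "2 powr (real_of_int k) / 2 < v")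
      case True
      have "2 powr (k - 1) < v" using True by (simp add: powr_diff)
      then have "log 2 (2 powr (k - 1)) < log 2 v" using v0 by (subst log_less_cancel_iff) auto
      then have "k - 1 < log 2 v" by simp
      then have kK: "k \<le> K" unfolding K_def by linarith
      have "q ^ nat (K - k) = 2 powr ((1 - s) * (K - k))"
        unfolding q_def using kK by (simp add: powr_power mult.commute)
      then have "B * q ^ nat (K - k) = 2 powr s * v * (2 powr ((s - 1) * K) * 2 powr ((1 - s) * (K - k)))"
        by (simp add: B_def)
      also have "2 powr ((s - 1) * K) * 2 powr ((1 - s) * (K - k)) = 2 powr ((s - 1) * k)"
        by (simp add: powr_add[symmetric] algebra_simps)
      also have "2 powr s * v * 2 powr ((s - 1) * k) = 2 powr ((real_of_int k + 1) * s) / 2 powr (real_of_int k) * v"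
        by (simp add: powr_add[symmetric] powr_diff[symmetric] algebra_simps)
      finally show ?thesis using True kK by simp
    qed simp
  qed
  also have "\<dots> = ennreal (B / (1 - q))" by (rule geo_int[OF q B0])
  also have "\<dots> \<le> ennreal (cs s * v powr s)"
  proof (rule ennreal_leI)
    have "real_of_int K \<le> log 2 v + 1" unfolding K_def by linarith
    then have "2 powr ((s - 1) * K) \<le> 2 powr ((s - 1) * (log 2 v + 1))"
      using s by (intro powr_mono mult_left_mono) auto
    also have "\<dots> = v powr (s - 1) * 2 powr (s - 1)"
    proof -
      have e: "(s - 1) * (log 2 v + 1) = log 2 v * (s - 1) + (s - 1)" by (simp add: algebra_simps)
      have "2 powr (log 2 v * (s - 1)) = (2 powr log 2 v) powr (s - 1)" by (simp only: powr_powr)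
      also have "\<dots> = v powr (s - 1)" using v0 by simp
      finally show ?thesis unfolding e by (simp only: powr_add)
    qed
    finally have "B \<le> 2 powr s * v * (v powr (s - 1) * 2 powr (s - 1))"
      unfolding B_def using v by (intro mult_left_mono) auto
    also have "\<dots> = 2 powr (2 * s - 1) * v powr s"
      using v0 by (simp add: powr_add[symmetric] algebra_simps powr_mult_base)
    finally have "B / (1 - q) \<le> 2 powr (2 * s - 1) * v powr s / (1 - q)"
      using q by (intro divide_right_mono) auto
    then show "B / (1 - q) \<le> cs s * v powr s" by (simp add: cs_def q_def)
  qed
  finally show ?thesis .
qed

lemma point_a:
  fixes a :: ennreal and s :: real and W :: "int \<Rightarrow> 'a set"
  assumes s: "1 < s" and hW: "\<And>k. ennreal (2 powr real_of_int k) < a \<Longrightarrow> x \<in> W k"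
  shows "epow a s \<le> (\<integral>\<^sup>+k. ennreal (2 powr ((real_of_int k + 1) * s)) * indicator (W k) x \<partial>count_space (UNIV::int set))"
    (is "_ \<le> ?T")
proof -
  have trm: "ennreal (2 powr ((real_of_int k + 1) * s)) \<le> ?T" if "x \<in> W k" for k
    using count_space_term_le[of k UNIV "\<lambda>k. ennreal (2 powr ((real_of_int k + 1) * s)) * indicator (W k) x"] that
    by simp
  show ?thesis
  proof (cases "a = top")
    case True
    have "?T = top"
    proof (rule ccontr)
      assume "?T \<noteq> top"
      then have "?T < top" by (simp add: less_top)
      then obtain t where t: "0 \<le> t" "?T = ennreal t" unfolding less_top_ennreal by blast
      define k where "k = \<lceil>t\<rceil>"
      have k0: "0 \<le> k" using t by (simp add: k_def)
      have "x \<in> W k" using True by (intro hW) simp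
      then have "ennreal (2 powr ((real_of_int k + 1) * s)) \<le> ennreal t" using trm t by simp
      then have le: "2 powr ((real_of_int k + 1) * s) \<le> t" using t by (simp add: ennreal_le_iff)
      have "t \<le> real_of_int k" unfolding k_def by simp
      also have "\<dots> < 2 powr real_of_int k" using k0 by (rule int_lt_2powr)
      also have "\<dots> \<le> 2 powr ((real_of_int k + 1) * s)"
      proof (rule powr_mono)
        have "real_of_int k + 1 \<le> (real_of_int k + 1) * s" using s k0 by simp
        then show "real_of_int k \<le> (real_of_int k + 1) * s" by simp
      qed simp
      finally show False using le by simp
    qed
    then show ?thesis by simp
  next
    case False
    define v where "v = enn2real a"
    have v: "0 \<le> v" "a = ennreal v" using False by (auto simp: v_def less_top)
    have ep: "epow a s = ennreal (v powr s)" using False by (simp add: epow_def v_def)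
    show ?thesis
    proof (cases "v = 0")
      case True then show ?thesis using ep by simp
    next
      case False
      then have v0: "0 < v" using v by simp
      define K where "K = \<lceil>log 2 v\<rceil> - 1"
      have "real_of_int K < log 2 v" unfolding K_def by linarith
      then have "2 powr real_of_int K < 2 powr (log 2 v)" by simp
      then have "2 powr real_of_int K < v" using v0 by simp
      then have "x \<in> W K" using v by (intro hW) (simp add: ennreal_less_iff)
      have "log 2 v \<le> real_of_int K + 1" unfolding K_def by linarith
      then have "2 powr (log 2 v) \<le> 2 powr (real_of_int K + 1)" by simp
      then have "v \<le> 2 powr (real_of_int K + 1)" using v0 by simp
      then have "v powr s \<le> (2 powr (real_of_int K + 1)) powr s" using v s by (intro powr_mono2) auto
      also have "\<dots> = 2 powr ((real_of_int K + 1) * s)" by (simp add: powr_powr)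
      finally have "ennreal (v powr s) \<le> ennreal (2 powr ((real_of_int K + 1) * s))" by (rule ennreal_leI)
      also have "\<dots> \<le> ?T" using \<open>x \<in> W K\<close> by (rule trm)
      finally show ?thesis using ep by simp
    qed
  qed
qed

lemma layer:
  fixes F :: "real^'n::finite \<Rightarrow> ennreal" and g :: "real^'n \<Rightarrow> real" and A s :: real
    and W :: "int \<Rightarrow> (real^'n) set"
  assumes gm[measurable]: "g \<in> borel_measurable lebesgue" and gnn: "\<And>z. 0 \<le> g z"
    and s: "1 < s" and A: "0 \<le> A"
    and Wm[measurable]: "\<And>k. W k \<in> sets lebesgue"
    and hW: "\<And>k x. ennreal (2 powr real_of_int k) < F x \<Longrightarrow> x \<in> W k"
    and Wb: "\<And>k. emeasure lebesgue (W k) \<le> ennreal (A / 2 powr real_of_int k) *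
        (\<integral>\<^sup>+z. ennreal (if 2 powr real_of_int k / 2 < g z then g z else 0) \<partial>lebesgue)"
  shows "(\<integral>\<^sup>+x. epow (F x) s \<partial>lebesgue) \<le> ennreal (A * cs s) * (\<integral>\<^sup>+x. ennreal (g x powr s) \<partial>lebesgue)"
proof -
  define c where "c k = 2 powr ((real_of_int k + 1) * s)" for k :: int
  define hk where "hk k z = (if 2 powr real_of_int k / 2 < g z then g z else 0)" for k :: int and z
  have hkm[measurable]: "(\<lambda>z. hk k z) \<in> borel_measurable lebesgue" for k unfolding hk_def by measurable
  have "(\<integral>\<^sup>+x. epow (F x) s \<partial>lebesgue) \<le> (\<integral>\<^sup>+x. (\<integral>\<^sup>+k. ennreal (c k) * indicator (W k) x \<partial>count_space UNIV) \<partial>lebesgue)"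
    unfolding c_def by (intro nn_integral_mono point_a[OF s] hW) 
  also have "\<dots> = (\<integral>\<^sup>+k. (\<integral>\<^sup>+x. ennreal (c k) * indicator (W k) x \<partial>lebesgue) \<partial>count_space UNIV)"
    by (intro nn_integral_count_space_nn_integral) auto
  also have "\<dots> = (\<integral>\<^sup>+k. ennreal (c k) * emeasure lebesgue (W k) \<partial>count_space UNIV)"
    by (intro nn_integral_cong nn_integral_cmult_indicator Wm)
  also have "\<dots> \<le> (\<integral>\<^sup>+k. ennreal (c k) * (ennreal (A / 2 powr real_of_int k) * (\<integral>\<^sup>+z. ennreal (hk k z) \<partial>lebesgue)) \<partial>count_space UNIV)"
    unfolding hk_def by (intro nn_integral_mono mult_left_mono Wb) auto
  also have "\<dots> = (\<integral>\<^sup>+k. (\<integral>\<^sup>+z. ennreal A * ennreal (c k / 2 powr real_of_int k * hk k z) \<partial>lebesgue) \<partial>count_space UNIV)"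
  proof (rule nn_integral_cong)
    fix k :: int
    have c0: "0 \<le> c k" by (simp add: c_def)
    have "ennreal (c k) * (ennreal (A / 2 powr real_of_int k) * (\<integral>\<^sup>+z. ennreal (hk k z) \<partial>lebesgue))
       = ennreal (A * (c k / 2 powr real_of_int k)) * (\<integral>\<^sup>+z. ennreal (hk k z) \<partial>lebesgue)"
      using c0 A by (simp add: ennreal_mult[symmetric] mult.assoc[symmetric] field_simps)
    also have "\<dots> = (\<integral>\<^sup>+z. ennreal (A * (c k / 2 powr real_of_int k)) * ennreal (hk k z) \<partial>lebesgue)"
      by (rule nn_integral_cmult[symmetric]) simp
    also have "\<dots> = (\<integral>\<^sup>+z. ennreal A * ennreal (c k / 2 powr real_of_int k * hk k z) \<partial>lebesgue)"
    proof (rule nn_integral_cong)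
      fix z
      have "0 \<le> hk k z" using gnn by (simp add: hk_def)
      then show "ennreal (A * (c k / 2 powr real_of_int k)) * ennreal (hk k z) = ennreal A * ennreal (c k / 2 powr real_of_int k * hk k z)"
        using c0 A by (simp add: ennreal_mult[symmetric] mult.assoc)
    qed
    finally show "ennreal (c k) * (ennreal (A / 2 powr real_of_int k) * (\<integral>\<^sup>+z. ennreal (hk k z) \<partial>lebesgue))
       = (\<integral>\<^sup>+z. ennreal A * ennreal (c k / 2 powr real_of_int k * hk k z) \<partial>lebesgue)" .
  qed
  also have "\<dots> = (\<integral>\<^sup>+z. (\<integral>\<^sup>+k. ennreal A * ennreal (c k / 2 powr real_of_int k * hk k z) \<partial>count_space UNIV) \<partial>lebesgue)"
    by (intro nn_integral_count_space_nn_integral[symmetric]) auto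
  also have "\<dots> = (\<integral>\<^sup>+z. ennreal A * (\<integral>\<^sup>+k. ennreal (c k / 2 powr real_of_int k * hk k z) \<partial>count_space UNIV) \<partial>lebesgue)"
    by (intro nn_integral_cong nn_integral_cmult) simp
  also have "\<dots> \<le> (\<integral>\<^sup>+z. ennreal A * ennreal (cs s * g z powr s) \<partial>lebesgue)"
  proof (intro nn_integral_mono mult_left_mono)
    fix z
    show "(\<integral>\<^sup>+k. ennreal (c k / 2 powr real_of_int k * hk k z) \<partial>count_space UNIV) \<le> ennreal (cs s * g z powr s)"
      using point_b[OF s gnn[of z]] unfolding c_def hk_def .
  qed simp
  also have "\<dots> = (\<integral>\<^sup>+z. ennreal (A * cs s) * ennreal (g z powr s) \<partial>lebesgue)"
  proof (rule nn_integral_cong)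
    fix z
    have "0 \<le> cs s"
    proof -
      have "2 powr (1 - s) < 2 powr 0" using s by (subst powr_less_cancel_iff) auto
      then show ?thesis by (simp add: cs_def)
    qed
    then show "ennreal A * ennreal (cs s * g z powr s) = ennreal (A * cs s) * ennreal (g z powr s)"
      using A by (simp add: ennreal_mult[symmetric] mult.assoc)
  qed
  also have "\<dots> = ennreal (A * cs s) * (\<integral>\<^sup>+z. ennreal (g z powr s) \<partial>lebesgue)"
    by (rule nn_integral_cmult) simp
  finally show ?thesis .
qed

lemma epow_epow:
  assumes "0 < t" "0 < p"
  shows "epow (epow a (1 / t)) p = epow a (p / t)"
proof (cases "a = top")
  case True then show ?thesis by (simp add: epow_def)
next
  case False
  have "0 \<le> enn2real a powr (1 / t)" by simp
  then show ?thesis using False assms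
    by (simp add: epow_def powr_powr)
qed

lemma epow_ennreal: "0 \<le> v \<Longrightarrow> epow (ennreal v) r = ennreal (v powr r)"
  by (simp add: epow_def)

lemma Dy_bound:
  "Dy (y::real^'n::finite) \<le> (2 * 4^CARD('n) * (3^CARD('n) + 1 / ln 2 + 1)) * ln (exp 1 + norm y)"
proof -
  define L where "L = ln (exp 1 + norm y)"
  have L1: "1 \<le> L"
  proof -
    have "exp 1 \<le> exp 1 + norm y" by simp
    then have "ln (exp 1) \<le> ln (exp 1 + norm y)" by (subst ln_le_cancel_iff) (auto intro: add_pos_nonneg)
    then show ?thesis by (simp add: L_def)
  qed
  have np: "0 < norm y + 2" using norm_ge_zero[of y] by linarith
  have x0: "0 \<le> log 2 (norm y + 2)" using np by (subst zero_le_log_cancel_iff) auto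
  then have "0 \<le> \<lceil>log 2 (norm y + 2)\<rceil>" by simp
  then have "real (Ly y) = real_of_int \<lceil>log 2 (norm y + 2)\<rceil>" unfolding Ly_def by simp
  also have "\<dots> \<le> log 2 (norm y + 2) + 1" by (rule of_int_ceiling_le_add_one)
  also have "log 2 (norm y + 2) \<le> log 2 (exp 1 + norm y)"
  proof -
    have "2 \<le> exp (1::real)" using exp_ge_add_one_self[of "1::real"] by simp
    then show ?thesis using np by (subst log_le_cancel_iff) auto
  qed
  also have "log 2 (exp 1 + norm y) = L / ln 2" by (simp add: L_def log_def)
  finally have Ly: "real (Ly y) \<le> L / ln 2 + 1" by simp
  have "3^CARD('n) + real (Ly y) \<le> 3^CARD('n) * L + (1 / ln 2) * L + 1 * L"
  proof -
    have "(3::real)^CARD('n) \<le> 3^CARD('n) * L" using L1 by simp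
    moreover have "L / ln 2 = (1 / ln 2) * L" by simp
    ultimately show ?thesis using Ly L1 by linarith
  qed
  also have "\<dots> = (3^CARD('n) + 1 / ln 2 + 1) * L" by (simp add: algebra_simps)
  finally have "3^CARD('n) + real (Ly y) \<le> (3^CARD('n) + 1 / ln 2 + 1) * L" .
  then have "2 * 4^CARD('n) * (3^CARD('n) + real (Ly y)) \<le> 2 * 4^CARD('n) * ((3^CARD('n) + 1 / ln 2 + 1) * L)"
    by (intro mult_left_mono) auto
  then show ?thesis by (simp add: Dy_def L_def mult.assoc)
qed

lemma cs_nonneg: "1 < s \<Longrightarrow> 0 \<le> cs s"
proof -
  assume s: "1 < s"
  have "2 powr (1 - s) < 2 powr 0" using s by (subst powr_less_cancel_iff) auto
  then show ?thesis by (simp add: cs_def)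
qed

lemma Dy_nonneg: "0 \<le> Dy y" by (simp add: Dy_def)

lemma final_arith:
  fixes X J :: ennreal and K M p :: real
  assumes X: "X \<le> ennreal K * J" and J: "J < top" and K: "0 \<le> K" "K \<le> M" and p: "0 < p"
  shows "epow X (1 / p) \<le> ennreal (M powr (1 / p)) * epow J (1 / p)"
proof -
  obtain j where j: "0 \<le> j" "J = ennreal j" using J unfolding less_top_ennreal by blast
  have "X \<le> ennreal (K * j)" using X j K by (simp add: ennreal_mult)
  then have "X < top" by (metis ennreal_less_top le_less_trans)
  then obtain x where x: "0 \<le> x" "X = ennreal x" unfolding less_top_ennreal by blast
  have "x \<le> K * j" using \<open>X \<le> ennreal (K * j)\<close> x j K by (simp add: ennreal_le_iff)
  also have "\<dots> \<le> M * j" using K j by (intro mult_right_mono) auto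
  finally have "x powr (1 / p) \<le> (M * j) powr (1 / p)" using x p by (intro powr_mono2) auto
  also have "\<dots> = M powr (1 / p) * j powr (1 / p)" using K j by (intro powr_mult)
  finally have "ennreal (x powr (1 / p)) \<le> ennreal (M powr (1 / p) * j powr (1 / p))" by (rule ennreal_leI)
  also have "\<dots> = ennreal (M powr (1 / p)) * ennreal (j powr (1 / p))" by (simp add: ennreal_mult)
  finally show ?thesis using x j by (simp add: epow_ennreal)
qed

theorem theorem1p3:
  fixes p t :: real
  assumes "0 < p" and "0 < t" and "t < p"
  shows "\<exists>C::real. \<forall>(y::real ^ 'n::finite) (f::real ^ 'n \<Rightarrow> real). in_Lp p f \<longrightarrow>
           Lp_norm p (shifted_max_t y t f)
             \<le> ennreal (C * ln (exp 1 + norm y) powr (1 / p)) * Lp_norm p (\<lambda>x. ennreal \<bar>f x\<bar>)"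
proof -
  define s where "s = p / t"
  have s1: "1 < s" using assms by (simp add: s_def)
  define D0 :: real where "D0 = 2 * 4^CARD('n) * (3^CARD('n) + 1 / ln 2 + 1)"
  have D0: "0 \<le> D0" by (simp add: D0_def)
  define C where "C = (D0 * cs s) powr (1 / p)"
  show ?thesis
  proof (intro exI allI impI)
    fix y :: "real^'n" and f :: "real^'n \<Rightarrow> real"
    assume f: "in_Lp p f"
    then have fm[measurable]: "f \<in> borel_measurable lebesgue"
      and J: "(\<integral>\<^sup>+x. ennreal (\<bar>f x\<bar> powr p) \<partial>lebesgue) < top" by (auto simp: in_Lp_def)
    define g where "g = (\<lambda>z. \<bar>f z\<bar> powr t)"
    have gm[measurable]: "g \<in> borel_measurable lebesgue" unfolding g_def by measurable
    have gnn: "\<And>z. 0 \<le> g z" by (simp add: g_def)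
    define P where "P k W \<longleftrightarrow> W \<in> sets lebesgue \<and> {x. ennreal (2 powr real_of_int k) < shifted_max y g x} \<subseteq> W \<and>
        emeasure lebesgue W \<le> ennreal (Dy y / 2 powr real_of_int k) *
          (\<integral>\<^sup>+z. ennreal (if 2 powr real_of_int k / 2 < g z then g z else 0) \<partial>lebesgue)" for k :: int and W
    have "\<forall>k. \<exists>W. P k W"
    proof
      fix k :: int
      have "\<exists>W\<in>sets lebesgue. {x. ennreal (2 powr real_of_int k) < shifted_max y g x} \<subseteq> W \<and>
        emeasure lebesgue W \<le> ennreal (Dy y / 2 powr real_of_int k) *
          (\<integral>\<^sup>+z. ennreal (if 2 powr real_of_int k / 2 < g z then g z else 0) \<partial>lebesgue)"
        by (rule weak_My[OF gm gnn]) simp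
      then show "\<exists>W. P k W" unfolding P_def by blast
    qed
    then have "\<exists>Wf. \<forall>k. P k (Wf k)" by (rule choice)
    then obtain Wf where Wf: "\<And>k. P k (Wf k)" by blast
    have X: "(\<integral>\<^sup>+x. epow (shifted_max y g x) s \<partial>lebesgue) \<le> ennreal (Dy y * cs s) * (\<integral>\<^sup>+x. ennreal (g x powr s) \<partial>lebesgue)"
    proof (rule layer[OF gm gnn s1 Dy_nonneg])
      show "\<And>k. Wf k \<in> sets lebesgue" using Wf by (simp add: P_def)
      show "\<And>k x. ennreal (2 powr real_of_int k) < shifted_max y g x \<Longrightarrow> x \<in> Wf k"
        using Wf unfolding P_def by blast
      show "\<And>k. emeasure lebesgue (Wf k) \<le> ennreal (Dy y / 2 powr real_of_int k) *
          (\<integral>\<^sup>+z. ennreal (if 2 powr real_of_int k / 2 < g z then g z else 0) \<partial>lebesgue)"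
        using Wf unfolding P_def by blast
    qed
    have gs: "g x powr s = \<bar>f x\<bar> powr p" for x
      using assms by (simp add: g_def s_def powr_powr)
    have L: "Lp_norm p (shifted_max_t y t f) = epow (\<integral>\<^sup>+x. epow (shifted_max y g x) s \<partial>lebesgue) (1 / p)"
      unfolding Lp_norm_def shifted_max_t_def g_def s_def using assms by (simp add: epow_epow)
    have R: "Lp_norm p (\<lambda>x. ennreal \<bar>f x\<bar>) = epow (\<integral>\<^sup>+x. ennreal (g x powr s) \<partial>lebesgue) (1 / p)"
      unfolding Lp_norm_def gs by (simp add: epow_ennreal)
    define Ly where "Ly = ln (exp 1 + norm y)"
    have Ly0: "0 \<le> Ly"
    proof -
      have "1 \<le> exp 1 + norm y" using exp_ge_add_one_self[of "1::real"] norm_ge_zero[of y] by linarith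
      then show ?thesis by (simp add: Ly_def)
    qed
    have KM: "Dy y * cs s \<le> D0 * cs s * Ly"
    proof -
      have "Dy y * cs s \<le> (D0 * Ly) * cs s"
        using Dy_bound[of y] cs_nonneg[OF s1] by (intro mult_right_mono) (auto simp: D0_def Ly_def)
      then show ?thesis by (simp add: algebra_simps)
    qed
    have "epow (\<integral>\<^sup>+x. epow (shifted_max y g x) s \<partial>lebesgue) (1 / p)
        \<le> ennreal ((D0 * cs s * Ly) powr (1 / p)) * epow (\<integral>\<^sup>+x. ennreal (g x powr s) \<partial>lebesgue) (1 / p)"
      using X J KM assms(1) Dy_nonneg[of y] cs_nonneg[OF s1] unfolding gs
      by (intro final_arith) (auto simp: gs)
    also have "(D0 * cs s * Ly) powr (1 / p) = C * ln (exp 1 + norm y) powr (1 / p)"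
      unfolding C_def Ly_def[symmetric] using D0 cs_nonneg[OF s1] Ly0 by (intro powr_mult)
    finally show "Lp_norm p (shifted_max_t y t f)
             \<le> ennreal (C * ln (exp 1 + norm y) powr (1 / p)) * Lp_norm p (\<lambda>x. ennreal \<bar>f x\<bar>)"
      unfolding L R .
  qed
qed

end
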